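(* Let $X$ be a real-valued continuous random variable with density $f$ and finite variance, and let $\phi$ be the Gaussian density with the same mean and variance as $f$. Then $$\sigma[X]\leq\sqrt2\,\exp\{D(f\|\phi)\},$$ with equality if and only if $X$ is Gaussian.
   Context: Differential entropy $h$ is assumed to exist and be finite. Doubling constant: $\sigma[X]=\exp\{h(X+X')-h(X)\}$ where $X'$ is an independent copy of $X$. $D(f\|g)=\int f\log(f/g)$ is relative entropy. *)

theory Defs
  imports "HOL-Probability.Probability"
begin

text \<open>All objects are densities w.r.t. Lebesgue measure on the real line.
  Note ln 0 = 0 in Isabelle, so 0 * ln 0 = 0 as usual.\<close>

definition diff_entropy :: "(real \<Rightarrow> real) \<Rightarrow> real" where
  "diff_entropy f = - (\<integral>x. f x * ln (f x) \<partial>lborel)"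

text \<open>Density of X + X' for X, X' independent with densities f, g.\<close>
definition conv :: "(real \<Rightarrow> real) \<Rightarrow> (real \<Rightarrow> real) \<Rightarrow> real \<Rightarrow> real" where
  "conv f g x = (\<integral>y. f y * g (x - y) \<partial>lborel)"

definition doubling_const :: "(real \<Rightarrow> real) \<Rightarrow> real" where
  "doubling_const f = exp (diff_entropy (conv f f) - diff_entropy f)"

definition rel_entropy :: "(real \<Rightarrow> real) \<Rightarrow> (real \<Rightarrow> real) \<Rightarrow> real" where
  "rel_entropy f g = (\<integral>x. f x * ln (f x / g x) \<partial>lborel)"

definition dens_mean :: "(real \<Rightarrow> real) \<Rightarrow> real" where
  "dens_mean f = (\<integral>x. x * f x \<partial>lborel)"

definition dens_var :: "(real \<Rightarrow> real) \<Rightarrow> real" where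
  "dens_var f = (\<integral>x. (x - dens_mean f)\<^sup>2 * f x \<partial>lborel)"

end

theory Submission
  imports Defs
begin


lemma gibbs_pointwise:
  fixes a b :: real assumes "a \<ge> 0" "b > 0"
  shows "a * ln (a / b) - a + b \<ge> 0" and "a * ln (a / b) - a + b = 0 \<longleftrightarrow> a = b"
proof -
  have main: "a * ln (a / b) - a + b \<ge> 0 \<and> (a * ln (a / b) - a + b = 0 \<longleftrightarrow> a = b)"
  proof (cases "a = 0")
    case True then show ?thesis using assms by auto
  next
    case False
    then have a: "a > 0" using assms by auto
    have q: "b / a > 0" using a assms by auto
    have l: "ln (a / b) = - ln (b / a)" using a assms by (simp add: ln_div)
    have "ln (b/a) \<le> b/a - 1" using ln_le_minus_one[OF q] .
    then have "a * ln (b/a) \<le> a * (b/a - 1)" using a by (simp add: mult_left_mono)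
    also have "a * (b/a - 1) = b - a" using a by (simp add: field_simps)
    finally have 1: "a * ln (a / b) - a + b \<ge> 0" using l by simp
    have 2: "a * ln (a / b) - a + b = 0 \<longleftrightarrow> a = b"
    proof
      assume "a * ln (a / b) - a + b = 0"
      then have "a * ln (b/a) = b - a" using l by (simp add: algebra_simps)
      also have "b - a = a * (b/a - 1)" using a by (simp add: field_simps)
      finally have "a * ln (b/a) = a * (b/a - 1)" .
      then have "ln (b/a) = b/a - 1" using a by simp
      then have "b/a = 1" using ln_eq_minus_one[OF q] by simp
      then show "a = b" using a by simp
    qed (use a in simp)
    show ?thesis using 1 2 by simp
  qed
  show "a * ln (a / b) - a + b \<ge> 0" using main by simp
  show "a * ln (a / b) - a + b = 0 \<longleftrightarrow> a = b" using main by simp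
qed

lemma ln_div_mult:
  fixes a b :: real assumes "a \<ge> 0" "b > 0"
  shows "a * ln (a / b) = a * ln a - a * ln b"
  using assms by (cases "a = 0") (auto simp: ln_div algebra_simps)

lemma gibbs:
  fixes g p :: "real \<Rightarrow> real"
  assumes gm[measurable]: "g \<in> borel_measurable borel" and pm[measurable]: "p \<in> borel_measurable borel"
    and g0: "\<And>x. g x \<ge> 0" and p0: "\<And>x. p x > 0"
    and gi: "has_bochner_integral lborel g 1" and pi: "has_bochner_integral lborel p 1"
    and i1: "integrable lborel (\<lambda>x. g x * ln (g x))" and i2: "integrable lborel (\<lambda>x. g x * ln (p x))"
  shows "integrable lborel (\<lambda>x. g x * ln (g x / p x))"
    and "(\<integral>x. g x * ln (g x / p x) \<partial>lborel) = (\<integral>x. g x * ln (g x) \<partial>lborel) - (\<integral>x. g x * ln (p x) \<partial>lborel)"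
    and "(\<integral>x. g x * ln (g x / p x) \<partial>lborel) \<ge> 0"
    and "(\<integral>x. g x * ln (g x / p x) \<partial>lborel) = 0 \<longleftrightarrow> (AE x in lborel. g x = p x)"
proof -
  have eq: "(\<lambda>x. g x * ln (g x / p x)) = (\<lambda>x. g x * ln (g x) - g x * ln (p x))"
    using ln_div_mult g0 p0 by auto
  show I: "integrable lborel (\<lambda>x. g x * ln (g x / p x))" unfolding eq using i1 i2 by simp
  show "(\<integral>x. g x * ln (g x / p x) \<partial>lborel) = (\<integral>x. g x * ln (g x) \<partial>lborel) - (\<integral>x. g x * ln (p x) \<partial>lborel)"
    unfolding eq using i1 i2 by simp
  have ig: "integrable lborel g" "integral\<^sup>L lborel g = 1" using gi by (auto simp: has_bochner_integral_iff)
  have ip: "integrable lborel p" "integral\<^sup>L lborel p = 1" using pi by (auto simp: has_bochner_integral_iff)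
  define k where "k x = g x * ln (g x / p x) - g x + p x" for x
  have Ik: "integrable lborel k" unfolding k_def using I ig ip by simp
  have k0: "\<And>x. k x \<ge> 0" unfolding k_def using gibbs_pointwise g0 p0 by auto
  have intk: "integral\<^sup>L lborel k = (\<integral>x. g x * ln (g x / p x) \<partial>lborel)"
    unfolding k_def using I ig ip by simp
  show "(\<integral>x. g x * ln (g x / p x) \<partial>lborel) \<ge> 0"
  proof -
    have "integral\<^sup>L lborel k \<ge> 0" using k0 by (simp add: integral_nonneg_AE)
    then show ?thesis using intk by simp
  qed
  have "integral\<^sup>L lborel k = 0 \<longleftrightarrow> (AE x in lborel. k x = 0)"
    by (rule integral_nonneg_eq_0_iff_AE) (use Ik k0 in auto)
  moreover have "\<And>x. k x = 0 \<longleftrightarrow> g x = p x" unfolding k_def using gibbs_pointwise g0 p0 by auto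
  ultimately show "(\<integral>x. g x * ln (g x / p x) \<partial>lborel) = 0 \<longleftrightarrow> (AE x in lborel. g x = p x)"
    using intk by simp
qed



lemma dens_prob:
  fixes f :: "real \<Rightarrow> real"
  assumes [measurable]: "f \<in> borel_measurable borel" and nn: "\<And>x. f x \<ge> 0"
    and prob: "has_bochner_integral lborel f 1"
  shows "prob_space (density lborel (\<lambda>x. ennreal (f x)))"
proof (rule prob_spaceI)
  have "integrable lborel f" "integral\<^sup>L lborel f = 1" using prob by (auto simp: has_bochner_integral_iff)
  then have "(\<integral>\<^sup>+x. ennreal (f x) \<partial>lborel) = 1"
    using nn by (simp add: nn_integral_eq_integral)
  then show "emeasure (density lborel (\<lambda>x. ennreal (f x))) (space (density lborel (\<lambda>x. ennreal (f x)))) = 1"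
    by (simp add: emeasure_density)
qed

lemma conv_facts:
  fixes f :: "real \<Rightarrow> real"
  assumes fm[measurable]: "f \<in> borel_measurable borel" and nn: "\<And>x. f x \<ge> 0"
    and prob: "has_bochner_integral lborel f 1"
  shows "conv f f \<in> borel_measurable borel" and "\<And>x. conv f f x \<ge> 0"
    and "density lborel (\<lambda>x. ennreal (conv f f x)) =
         (density lborel (\<lambda>x. ennreal (f x)) \<star> density lborel (\<lambda>x. ennreal (f x)))"
proof -
  have cm: "(\<lambda>x. \<integral>y. f y * f (x - y) \<partial>lborel) \<in> borel_measurable borel"
  proof -
    have "(\<lambda>x. \<integral>y. f y * f (x - y) \<partial>lborel) \<in> borel_measurable lborel"
      by (rule lborel.borel_measurable_lebesgue_integral) measurable
    then show ?thesis by simp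
  qed
  then show cm': "conv f f \<in> borel_measurable borel" unfolding conv_def[abs_def] .
  show "\<And>x. conv f f x \<ge> 0" unfolding conv_def using nn by (simp add: integral_nonneg_AE)
  define h where "h x = (\<integral>\<^sup>+y. ennreal (f (x - y)) * ennreal (f y) \<partial>lborel)" for x
  let ?F = "density lborel (\<lambda>x. ennreal (f x))"
  interpret F: prob_space ?F by (rule dens_prob) (use assms in auto)
  have fin: "finite_measure ?F" by unfold_locales
  have cd: "(?F \<star> ?F) = density lborel h"
    unfolding h_def by (rule convolution_density) (use fin in auto)
  have hm[measurable]: "h \<in> borel_measurable borel" unfolding h_def by measurable
  have "prob_space (density lborel h)"
    unfolding h_def using nn
    by (intro prob_space_convolution_density) (auto intro: dens_prob prob)
  then have "emeasure (density lborel h) UNIV = 1"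
    using prob_space.emeasure_space_1 by fastforce
  then have "(\<integral>\<^sup>+x. h x \<partial>lborel) = 1" by (simp add: emeasure_density)
  then have "AE x in lborel. h x \<noteq> \<infinity>" by (intro nn_integral_PInf_AE) auto
  then have "AE x in lborel. ennreal (conv f f x) = h x"
  proof eventually_elim
    case (elim x)
    have hx: "h x = (\<integral>\<^sup>+y. ennreal (f y * f (x - y)) \<partial>lborel)"
      unfolding h_def using nn by (simp add: ennreal_mult' mult.commute)
    have int: "integrable lborel (\<lambda>y. f y * f (x - y))"
    proof (rule integrableI_bounded)
      show "(\<lambda>y. f y * f (x - y)) \<in> borel_measurable lborel" by measurable
      have "(\<integral>\<^sup>+y. ennreal (norm (f y * f (x - y))) \<partial>lborel) = h x"
        unfolding hx using nn by simp
      then show "(\<integral>\<^sup>+y. ennreal (norm (f y * f (x - y))) \<partial>lborel) < \<infinity>"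
        using elim by (simp add: less_top)
    qed
    have "h x = ennreal (\<integral>y. f y * f (x - y) \<partial>lborel)"
      unfolding hx using int nn by (simp add: nn_integral_eq_integral)
    then show ?case unfolding conv_def by simp
  qed
  then have "density lborel (\<lambda>x. ennreal (conv f f x)) = density lborel h"
    by (intro density_cong) (use cm' in auto)
  then show "density lborel (\<lambda>x. ennreal (conv f f x)) = (?F \<star> ?F)" using cd by simp
qed



lemma prod_int:
  fixes a b :: "real \<Rightarrow> 'c::{real_normed_field, banach, second_countable_topology}"
  assumes P: "prob_space F"
    and a[measurable]: "a \<in> borel_measurable F" and b[measurable]: "b \<in> borel_measurable F"
    and ia: "integrable F a" and ib: "integrable F b"
  shows "integrable (F \<Otimes>\<^sub>M F) (\<lambda>z. a (fst z) * b (snd z))"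
    and "(\<integral>z. a (fst z) * b (snd z) \<partial>(F \<Otimes>\<^sub>M F)) = integral\<^sup>L F a * integral\<^sup>L F b"
proof -
  interpret F: prob_space F by fact
  interpret PP: pair_prob_space F F ..
  show I: "integrable (F \<Otimes>\<^sub>M F) (\<lambda>z. a (fst z) * b (snd z))"
  proof (rule PP.Fubini_integrable)
    show "(\<lambda>z. a (fst z) * b (snd z)) \<in> borel_measurable (F \<Otimes>\<^sub>M F)" by measurable
    have "(\<lambda>x. \<integral>y. norm (a (fst (x, y)) * b (snd (x, y))) \<partial>F) = (\<lambda>x. norm (a x) * (\<integral>y. norm (b y) \<partial>F))"
      by (simp add: norm_mult)
    moreover have "integrable F (\<lambda>x. norm (a x) * (\<integral>y. norm (b y) \<partial>F))"
      using ia by (intro integrable_mult_left integrable_norm)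
    ultimately show "integrable F (\<lambda>x. \<integral>y. norm (a (fst (x, y)) * b (snd (x, y))) \<partial>F)" by simp
    show "AE x in F. integrable F (\<lambda>y. a (fst (x, y)) * b (snd (x, y)))"
      using ib by (simp add: integrable_mult_right)
  qed
  have "(\<integral>z. a (fst z) * b (snd z) \<partial>(F \<Otimes>\<^sub>M F)) = (\<integral>z. (\<lambda>(x, y). a x * b y) z \<partial>(F \<Otimes>\<^sub>M F))"
    by (simp add: case_prod_beta)
  also have "\<dots> = (\<integral>x. (\<integral>y. a x * b y \<partial>F) \<partial>F)"
  proof -
    have I': "integrable (F \<Otimes>\<^sub>M F) (\<lambda>(x, y). a x * b y)"
      using I by (simp add: case_prod_beta')
    show ?thesis using PP.integral_fst[OF I'] by simp
  qed
  also have "\<dots> = (\<integral>x. a x * integral\<^sup>L F b \<partial>F)" by simp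
  also have "\<dots> = integral\<^sup>L F a * integral\<^sup>L F b" by simp
  finally show "(\<integral>z. a (fst z) * b (snd z) \<partial>(F \<Otimes>\<^sub>M F)) = integral\<^sup>L F a * integral\<^sup>L F b" .
qed



lemma basic_moments:
  fixes f :: "real \<Rightarrow> real"
  assumes fm[measurable]: "f \<in> borel_measurable borel" and nn: "\<And>x. f x \<ge> 0"
    and prob: "has_bochner_integral lborel f 1"
    and finvar: "integrable lborel (\<lambda>x. x\<^sup>2 * f x)"
  shows "integrable lborel f" "integral\<^sup>L lborel f = 1"
    "integrable lborel (\<lambda>x. x * f x)"
    "integrable lborel (\<lambda>x. (x - dens_mean f)\<^sup>2 * f x)"
    "(\<integral>x. (x - dens_mean f) * f x \<partial>lborel) = 0"
    "integrable lborel (\<lambda>x. (x - dens_mean f) * f x)"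
proof -
  show i1: "integrable lborel f" "integral\<^sup>L lborel f = 1" using prob by (auto simp: has_bochner_integral_iff)
  show i2: "integrable lborel (\<lambda>x. x * f x)"
  proof (rule Bochner_Integration.integrable_bound)
    show "integrable lborel (\<lambda>x. f x + x\<^sup>2 * f x)" using i1 finvar by simp
    show "(\<lambda>x. x * f x) \<in> borel_measurable lborel" by measurable
    show "AE x in lborel. norm (x * f x) \<le> norm (f x + x\<^sup>2 * f x)"
    proof (rule AE_I2)
      fix x :: real
      have "\<bar>x\<bar> \<le> 1 + x\<^sup>2" proof -
        have "0 \<le> (\<bar>x\<bar> - 1)\<^sup>2" by simp
        then have "0 \<le> \<bar>x\<bar>\<^sup>2 - 2 * \<bar>x\<bar> + 1" by (simp add: power2_eq_square algebra_simps)
        then show ?thesis by simp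
      qed
      then have "\<bar>x\<bar> * f x \<le> (1 + x\<^sup>2) * f x" using nn by (simp add: mult_right_mono)
      then show "norm (x * f x) \<le> norm (f x + x\<^sup>2 * f x)" using nn by (simp add: abs_mult algebra_simps)
    qed
  qed
  let ?m = "dens_mean f"
  have e: "(\<lambda>x. (x - ?m)\<^sup>2 * f x) = (\<lambda>x. x\<^sup>2 * f x - 2 * ?m * (x * f x) + ?m\<^sup>2 * f x)"
    by (auto simp: power2_eq_square algebra_simps)
  show "integrable lborel (\<lambda>x. (x - ?m)\<^sup>2 * f x)" unfolding e using i1 i2 finvar by simp
  have e2: "(\<lambda>x. (x - ?m) * f x) = (\<lambda>x. x * f x - ?m * f x)" by (auto simp: algebra_simps)
  show "integrable lborel (\<lambda>x. (x - ?m) * f x)" unfolding e2 using i1 i2 by simp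
  show "(\<integral>x. (x - ?m) * f x \<partial>lborel) = 0" unfolding e2 using i1 i2 by (simp add: dens_mean_def)
qed



lemma conv_moments:
  fixes f :: "real \<Rightarrow> real"
  assumes fm[measurable]: "f \<in> borel_measurable borel" and nn: "\<And>x. f x \<ge> 0"
    and prob: "has_bochner_integral lborel f 1"
    and finvar: "integrable lborel (\<lambda>x. x\<^sup>2 * f x)"
  shows "has_bochner_integral lborel (conv f f) 1"
    "integrable lborel (\<lambda>x. conv f f x * (x - 2 * dens_mean f)\<^sup>2)"
    "(\<integral>x. conv f f x * (x - 2 * dens_mean f)\<^sup>2 \<partial>lborel) = 2 * dens_var f"
    "\<And>t. char (density lborel (\<lambda>x. ennreal (conv f f x))) t = char (density lborel (\<lambda>x. ennreal (f x))) t ^ 2"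
proof -
  note cf = conv_facts[OF fm nn prob]
  have gm[measurable]: "conv f f \<in> borel_measurable borel" by (rule cf(1))
  have g0: "\<And>x. conv f f x \<ge> 0" by (rule cf(2))
  let ?F = "density lborel (\<lambda>x. ennreal (f x))"
  let ?G = "density lborel (\<lambda>x. ennreal (conv f f x))"
  interpret F: prob_space ?F by (rule dens_prob) (use assms in auto)
  have GD: "?G = distr (?F \<Otimes>\<^sub>M ?F) borel (\<lambda>(x, y). x + y)"
    using cf(3) by (simp add: convolution_def)
  have sF: "sets ?F = sets borel" by simp
  have addm[measurable]: "(\<lambda>(x::real, y). x + y) \<in> measurable (?F \<Otimes>\<^sub>M ?F) borel"
    by (simp add: case_prod_beta')
  have tG: "integrable lborel (\<lambda>x. conv f f x *\<^sub>R k x) \<longleftrightarrow> integrable (?F \<Otimes>\<^sub>M ?F) (\<lambda>z. k (fst z + snd z))"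
     "(\<integral>x. conv f f x *\<^sub>R k x \<partial>lborel) = (\<integral>z. k (fst z + snd z) \<partial>(?F \<Otimes>\<^sub>M ?F))"
    if km[measurable]: "k \<in> borel_measurable borel" for k :: "real \<Rightarrow> 'c::{banach, second_countable_topology}"
  proof -
    have "integrable lborel (\<lambda>x. conv f f x *\<^sub>R k x) \<longleftrightarrow> integrable ?G k"
      using g0 by (subst integrable_density) auto
    also have "\<dots> \<longleftrightarrow> integrable (?F \<Otimes>\<^sub>M ?F) (\<lambda>z. k (fst z + snd z))"
      unfolding GD by (subst integrable_distr_eq) (auto simp: case_prod_beta')
    finally show "integrable lborel (\<lambda>x. conv f f x *\<^sub>R k x) \<longleftrightarrow> integrable (?F \<Otimes>\<^sub>M ?F) (\<lambda>z. k (fst z + snd z))" .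
    have "(\<integral>x. conv f f x *\<^sub>R k x \<partial>lborel) = integral\<^sup>L ?G k"
      using g0 by (subst integral_density) auto
    also have "\<dots> = (\<integral>z. k (fst z + snd z) \<partial>(?F \<Otimes>\<^sub>M ?F))"
      unfolding GD by (subst integral_distr) (auto simp: case_prod_beta')
    finally show "(\<integral>x. conv f f x *\<^sub>R k x \<partial>lborel) = (\<integral>z. k (fst z + snd z) \<partial>(?F \<Otimes>\<^sub>M ?F))" .
  qed
  have tF: "integrable ?F k \<longleftrightarrow> integrable lborel (\<lambda>x. f x *\<^sub>R k x)"
     "integral\<^sup>L ?F k = (\<integral>x. f x *\<^sub>R k x \<partial>lborel)"
    if km[measurable]: "k \<in> borel_measurable borel" for k :: "real \<Rightarrow> 'c::{banach, second_countable_topology}"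
    using nn by (auto simp: integrable_density integral_density)
  note bm = basic_moments[OF fm nn prob finvar]
  let ?m = "dens_mean f"
  have F1: "integrable ?F (\<lambda>x. 1::real)" "integral\<^sup>L ?F (\<lambda>x. 1::real) = 1"
    using bm F.prob_space by (simp_all add: tF)
  have ma: "(\<lambda>x::real. x - ?m) \<in> borel_measurable borel" by measurable
  have mb: "(\<lambda>x::real. (x - ?m)\<^sup>2) \<in> borel_measurable borel" by measurable
  have Fa: "integrable ?F (\<lambda>x. x - ?m)" "integral\<^sup>L ?F (\<lambda>x. x - ?m) = 0"
    using bm tF[OF ma] by (simp_all add: mult.commute)
  have Fb: "integrable ?F (\<lambda>x. (x - ?m)\<^sup>2)" "integral\<^sup>L ?F (\<lambda>x. (x - ?m)\<^sup>2) = dens_var f"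
    using bm tF[OF mb] by (simp_all add: mult.commute dens_var_def)
  have c1: "(\<lambda>x::real. 1::real) \<in> borel_measurable ?F" by simp
  have ca: "(\<lambda>x::real. x - ?m) \<in> borel_measurable ?F" by simp
  have cb: "(\<lambda>x::real. (x - ?m)\<^sup>2) \<in> borel_measurable ?F" by simp
  note P1 = prod_int[OF F.prob_space_axioms cb c1 Fb(1) F1(1)]
  note P2 = prod_int[OF F.prob_space_axioms ca ca Fa(1) Fa(1)]
  note P3 = prod_int[OF F.prob_space_axioms c1 cb F1(1) Fb(1)]
  note P0 = prod_int[OF F.prob_space_axioms c1 c1 F1(1) F1(1)]
  have ex: "(\<lambda>z. (fst z + snd z - 2 * ?m)\<^sup>2) = (\<lambda>z. ((fst z - ?m)\<^sup>2 * 1 + 2 * ((fst z - ?m) * (snd z - ?m))) + 1 * (snd z - ?m)\<^sup>2)"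
    by (auto simp: power2_eq_square algebra_simps)
  have I12: "integrable (?F \<Otimes>\<^sub>M ?F) (\<lambda>z. (fst z - ?m)\<^sup>2 * 1 + 2 * ((fst z - ?m) * (snd z - ?m)))"
    by (rule Bochner_Integration.integrable_add[OF P1(1) integrable_mult_right[OF P2(1)]])
  have Iprod: "integrable (?F \<Otimes>\<^sub>M ?F) (\<lambda>z. (fst z + snd z - 2 * ?m)\<^sup>2)"
    unfolding ex by (rule Bochner_Integration.integrable_add[OF I12 P3(1)])
  have "(\<integral>z. (fst z + snd z - 2 * ?m)\<^sup>2 \<partial>(?F \<Otimes>\<^sub>M ?F))
      = (\<integral>z. (fst z - ?m)\<^sup>2 * 1 + 2 * ((fst z - ?m) * (snd z - ?m)) \<partial>(?F \<Otimes>\<^sub>M ?F))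
        + (\<integral>z. 1 * (snd z - ?m)\<^sup>2 \<partial>(?F \<Otimes>\<^sub>M ?F))"
    unfolding ex by (rule Bochner_Integration.integral_add[OF I12 P3(1)])
  also have "(\<integral>z. (fst z - ?m)\<^sup>2 * 1 + 2 * ((fst z - ?m) * (snd z - ?m)) \<partial>(?F \<Otimes>\<^sub>M ?F))
      = (\<integral>z. (fst z - ?m)\<^sup>2 * 1 \<partial>(?F \<Otimes>\<^sub>M ?F)) + (\<integral>z. 2 * ((fst z - ?m) * (snd z - ?m)) \<partial>(?F \<Otimes>\<^sub>M ?F))"
    by (rule Bochner_Integration.integral_add[OF P1(1) integrable_mult_right[OF P2(1)]])
  also have "(\<integral>z. 2 * ((fst z - ?m) * (snd z - ?m)) \<partial>(?F \<Otimes>\<^sub>M ?F)) = 2 * (\<integral>z. (fst z - ?m) * (snd z - ?m) \<partial>(?F \<Otimes>\<^sub>M ?F))"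
    by (rule integral_mult_right_zero)
  finally have Vprod: "(\<integral>z. (fst z + snd z - 2 * ?m)\<^sup>2 \<partial>(?F \<Otimes>\<^sub>M ?F)) = 2 * dens_var f"
    unfolding P1(2) P2(2) P3(2) Fa(2) Fb(2) F1(2) by simp
  have k2: "(\<lambda>x::real. (x - 2 * ?m)\<^sup>2) \<in> borel_measurable borel" by measurable
  show "integrable lborel (\<lambda>x. conv f f x * (x - 2 * ?m)\<^sup>2)"
    using tG(1)[OF k2] Iprod by simp
  show "(\<integral>x. conv f f x * (x - 2 * ?m)\<^sup>2 \<partial>lborel) = 2 * dens_var f"
    using tG(2)[OF k2] Vprod by simp
  have k1: "(\<lambda>x::real. 1::real) \<in> borel_measurable borel" by measurable
  have "integrable lborel (conv f f)" "integral\<^sup>L lborel (conv f f) = 1"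
    using tG[OF k1] P0 F1 by simp_all
  then show "has_bochner_integral lborel (conv f f) 1" by (simp add: has_bochner_integral_iff)
  fix t :: real
  have ie: "integrable ?F (\<lambda>x. iexp (t * x))"
    by (rule F.integrable_iexp) auto
  have "char ?G t = (\<integral>x. conv f f x *\<^sub>R iexp (t * x) \<partial>lborel)"
    unfolding char_def using g0 by (subst integral_density) auto
  also have "\<dots> = (\<integral>z. iexp (t * (fst z + snd z)) \<partial>(?F \<Otimes>\<^sub>M ?F))"
    by (rule tG(2)) measurable
  also have "\<dots> = (\<integral>z. iexp (t * fst z) * iexp (t * snd z) \<partial>(?F \<Otimes>\<^sub>M ?F))"
    by (simp add: distrib_left exp_add[symmetric] algebra_simps)
  also have "\<dots> = char ?F t * char ?F t"
    unfolding char_def by (rule prod_int(2)[OF F.prob_space_axioms _ _ ie ie]) measurable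
  finally show "char ?G t = char ?F t ^ 2" by (simp add: power2_eq_square)
qed



lemma ln_normal:
  assumes "s > 0"
  shows "ln (normal_density m s x) = - ln (2 * pi * s\<^sup>2) / 2 - (x - m)\<^sup>2 / (2 * s\<^sup>2)"
proof -
  have p: "2 * pi * s\<^sup>2 > 0" using assms by simp
  have "ln (normal_density m s x) = ln (1 / sqrt (2 * pi * s\<^sup>2)) + ln (exp (-(x - m)\<^sup>2/ (2 * s\<^sup>2)))"
    unfolding normal_density_def using p by (subst ln_mult) auto
  also have "\<dots> = - ln (2 * pi * s\<^sup>2) / 2 - (x - m)\<^sup>2 / (2 * s\<^sup>2)"
    using p by (simp add: ln_div ln_sqrt)
  finally show ?thesis .
qed

lemma char_normal:
  assumes s: "s > 0"
  shows "char (density lborel (\<lambda>x. ennreal (normal_density m s x))) t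
         = iexp (m * t) * complex_of_real (exp (- (s * t)\<^sup>2 / 2))"
proof -
  have "char (density lborel (\<lambda>x. ennreal (normal_density m s x))) t
      = (\<integral>x. normal_density m s x *\<^sub>R iexp (t * x) \<partial>lborel)"
    unfolding char_def by (subst integral_density) auto
  also have "\<dots> = \<bar>s\<bar> *\<^sub>R (\<integral>y. normal_density m s (m + s * y) *\<^sub>R iexp (t * (m + s * y)) \<partial>lborel)"
    using s by (subst lborel_integral_real_affine[where c = s and t = m]) auto
  also have "\<dots> = (\<integral>y. std_normal_density y *\<^sub>R (iexp (m * t) * iexp ((s * t) * y)) \<partial>lborel)"
  proof -
    have "\<And>y. \<bar>s\<bar> *\<^sub>R (normal_density m s (m + s * y) *\<^sub>R iexp (t * (m + s * y)))
           = std_normal_density y *\<^sub>R (iexp (m * t) * iexp ((s * t) * y))"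
    proof -
      fix y
      have "\<bar>s\<bar> * normal_density m s (m + s * y) = std_normal_density y"
        using s unfolding normal_density_def
        by (simp add: real_sqrt_mult power2_eq_square field_simps)
      moreover have "iexp (t * (m + s * y)) = iexp (m * t) * iexp ((s * t) * y)"
        by (simp add: exp_add[symmetric] algebra_simps)
      ultimately show "\<bar>s\<bar> *\<^sub>R (normal_density m s (m + s * y) *\<^sub>R iexp (t * (m + s * y)))
           = std_normal_density y *\<^sub>R (iexp (m * t) * iexp ((s * t) * y))"
        by (metis scaleR_scaleR)
    qed
    then show ?thesis by (subst integral_scaleR_right[symmetric]) (simp del: of_real_mult)
  qed
  also have "\<dots> = iexp (m * t) * (\<integral>y. std_normal_density y *\<^sub>R iexp ((s * t) * y) \<partial>lborel)"
    by (simp only: mult_scaleR_right[symmetric] integral_mult_right_zero)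
  also have "(\<integral>y. std_normal_density y *\<^sub>R iexp ((s * t) * y) \<partial>lborel) = char std_normal_distribution (s * t)"
    unfolding char_def by (subst integral_density) auto
  also have "\<dots> = complex_of_real (exp (- (s * t)\<^sup>2 / 2))"
    by (simp add: char_std_normal_distribution)
  finally show ?thesis .
qed



lemma sign_const:
  fixes d :: "real \<Rightarrow> complex"
  assumes c: "continuous_on UNIV d" and sq: "\<And>t. (d t)\<^sup>2 = 1" and d0: "d 0 = 1"
  shows "d t = 1"
proof (rule ccontr)
  assume ne: "d t \<noteq> 1"
  then have dm: "d t = -1" using sq[of t] power2_eq_1_iff by blast
  have cr: "continuous_on S (\<lambda>x. Re (d x))" for S
    by (intro continuous_intros continuous_on_subset[OF c]) auto
  have pm: "\<And>x. Re (d x) = 1 \<or> Re (d x) = -1"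
    using sq power2_eq_1_iff by (metis minus_complex.simps(1) one_complex.simps(1) uminus_complex.simps(1))
  have "\<exists>x. Re (d x) = 0"
  proof (cases "t \<ge> 0")
    case True
    show ?thesis using IVT2'[of "\<lambda>x. Re (d x)" t 0 0, OF _ _ True cr] d0 dm by auto
  next
    case False
    show ?thesis using IVT'[of "\<lambda>x. Re (d x)" t 0 0, OF _ _ _ cr] d0 dm False by auto
  qed
  then obtain x where "Re (d x) = 0" by blast
  then show False using pm[of x] by simp
qed

lemma char_sq_normal:
  fixes F :: "real measure"
  assumes F: "real_distribution F" and s: "s > 0"
    and sq: "\<And>t. (char F t)\<^sup>2 = (iexp (m * t) * complex_of_real (exp (- (s * t)\<^sup>2 / 2)))\<^sup>2"
  shows "F = density lborel (\<lambda>x. ennreal (normal_density m s x))"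
proof -
  interpret F: real_distribution F by fact
  define e where "e t = iexp (m * t) * complex_of_real (exp (- (s * t)\<^sup>2 / 2))" for t
  have enz: "e t \<noteq> 0" for t unfolding e_def by simp
  define d where "d t = char F t / e t" for t
  have ce: "continuous_on UNIV e" unfolding e_def by (intro continuous_intros) auto
  have cc: "continuous_on UNIV (char F)"
    using F.isCont_char by (simp add: continuous_at_imp_continuous_on)
  have cd: "continuous_on UNIV d" unfolding d_def using ce cc enz by (intro continuous_intros) auto
  have sqd: "(d t)\<^sup>2 = 1" for t unfolding d_def using sq[of t] enz[of t] by (simp add: power_divide e_def)
  have d0: "d 0 = 1" unfolding d_def e_def using F.char_zero by simp
  have "\<And>t. d t = 1" using sign_const[OF cd sqd d0] .
  then have "\<And>t. char F t = e t" unfolding d_def using enz by (metis divide_eq_1_iff)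
  then have "char F = char (density lborel (\<lambda>x. ennreal (normal_density m s x)))"
    using char_normal[OF s] unfolding e_def by auto
  moreover have "real_distribution (density lborel (\<lambda>x. ennreal (normal_density m s x)))"
    using prob_space_normal_density[OF s] by (auto simp: real_distribution_def real_distribution_axioms_def)
  ultimately show ?thesis using Levy_uniqueness[OF F] by blast
qed



lemma int_ln_normal:
  fixes h :: "real \<Rightarrow> real"
  assumes hm[measurable]: "h \<in> borel_measurable borel" and b: "b > 0"
    and ih: "has_bochner_integral lborel h 1"
    and iq: "integrable lborel (\<lambda>x. h x * (x - a)\<^sup>2)" and V: "(\<integral>x. h x * (x - a)\<^sup>2 \<partial>lborel) = V"
  shows "integrable lborel (\<lambda>x. h x * ln (normal_density a b x))"
    "(\<integral>x. h x * ln (normal_density a b x) \<partial>lborel) = - ln (2 * pi * b\<^sup>2) / 2 - V / (2 * b\<^sup>2)"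
proof -
  have i1: "integrable lborel h" "integral\<^sup>L lborel h = 1" using ih by (auto simp: has_bochner_integral_iff)
  have e: "(\<lambda>x. h x * ln (normal_density a b x)) = (\<lambda>x. (- ln (2 * pi * b\<^sup>2) / 2) * h x - (1 / (2 * b\<^sup>2)) * (h x * (x - a)\<^sup>2))"
    using b by (auto simp: ln_normal algebra_simps)
  show "integrable lborel (\<lambda>x. h x * ln (normal_density a b x))" unfolding e using i1 iq by simp
  show "(\<integral>x. h x * ln (normal_density a b x) \<partial>lborel) = - ln (2 * pi * b\<^sup>2) / 2 - V / (2 * b\<^sup>2)"
    unfolding e using i1 iq V by simp
qed

lemma var_pos:
  fixes f :: "real \<Rightarrow> real"
  assumes fm[measurable]: "f \<in> borel_measurable borel" and nn: "\<And>x. f x \<ge> 0"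
    and prob: "has_bochner_integral lborel f 1"
    and finvar: "integrable lborel (\<lambda>x. x\<^sup>2 * f x)"
  shows "dens_var f > 0"
proof -
  note bm = basic_moments[OF fm nn prob finvar]
  let ?m = "dens_mean f"
  have ge: "dens_var f \<ge> 0" unfolding dens_var_def using nn by (simp add: integral_nonneg_AE)
  show ?thesis
  proof (rule ccontr)
    assume "\<not> dens_var f > 0"
    then have "dens_var f = 0" using ge by simp
    then have "AE x in lborel. (x - ?m)\<^sup>2 * f x = 0"
      unfolding dens_var_def using bm(4) nn by (subst integral_nonneg_eq_0_iff_AE[symmetric]) auto
    then have "AE x in lborel. f x = 0"
      using AE_lborel_singleton[of ?m] by eventually_elim auto
    then have "integral\<^sup>L lborel f = 0" by (rule integral_eq_zero_AE)
    then show False using bm(2) by simp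
  qed
qed



lemma iexp_sq: "(iexp a * complex_of_real (exp b))\<^sup>2 = iexp (2 * a) * complex_of_real (exp (2 * b))"
proof -
  have "(iexp a * complex_of_real (exp b))\<^sup>2 = exp (\<i> * complex_of_real a + complex_of_real b) ^ 2"
    by (simp add: exp_add exp_of_real)
  also have "\<dots> = exp (2 * (\<i> * complex_of_real a + complex_of_real b))"
    by (rule exp_double[symmetric])
  also have "\<dots> = iexp (2 * a) * complex_of_real (exp (2 * b))"
    by (simp add: exp_add exp_of_real[symmetric] algebra_simps)
  finally show ?thesis .
qed

lemma real_dist_dens:
  fixes f :: "real \<Rightarrow> real"
  assumes [measurable]: "f \<in> borel_measurable borel" and nn: "\<And>x. f x \<ge> 0"
    and prob: "has_bochner_integral lborel f 1"
  shows "real_distribution (density lborel (\<lambda>x. ennreal (f x)))"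
  using dens_prob[OF assms] by (auto simp: real_distribution_def real_distribution_axioms_def)

lemma dens_eq_AE:
  fixes f g :: "real \<Rightarrow> real"
  assumes [measurable]: "f \<in> borel_measurable borel" "g \<in> borel_measurable borel"
    and "\<And>x. f x \<ge> 0" "\<And>x. g x \<ge> 0"
  shows "density lborel (\<lambda>x. ennreal (f x)) = density lborel (\<lambda>x. ennreal (g x)) \<longleftrightarrow> (AE x in lborel. f x = g x)"
proof -
  have "density lborel (\<lambda>x. ennreal (f x)) = density lborel (\<lambda>x. ennreal (g x)) \<longleftrightarrow> (AE x in lborel. ennreal (f x) = ennreal (g x))"
    by (rule sigma_finite_measure.density_unique_iff[OF sigma_finite_lborel]) auto
  also have "\<dots> \<longleftrightarrow> (AE x in lborel. f x = g x)" using assms(3,4) by (simp add: ennreal_inj)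
  finally show ?thesis .
qed

lemma gauss_iff:
  fixes f :: "real \<Rightarrow> real"
  assumes fm[measurable]: "f \<in> borel_measurable borel" and nn: "\<And>x. f x \<ge> 0"
    and prob: "has_bochner_integral lborel f 1"
    and finvar: "integrable lborel (\<lambda>x. x\<^sup>2 * f x)"
  shows "(AE x in lborel. conv f f x = normal_density (2 * dens_mean f) (sqrt (2 * dens_var f)) x)
     \<longleftrightarrow> (\<exists>m s. s > 0 \<and> (AE x in lborel. f x = normal_density m s x))"
proof -
  note cf = conv_facts[OF fm nn prob]
  note cm = conv_moments[OF fm nn prob finvar]
  have gm[measurable]: "conv f f \<in> borel_measurable borel" by (rule cf(1))
  let ?F = "density lborel (\<lambda>x. ennreal (f x))"
  let ?G = "density lborel (\<lambda>x. ennreal (conv f f x))"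
  have vp: "dens_var f > 0" by (rule var_pos[OF fm nn prob finvar])
  let ?m = "dens_mean f" and ?v = "dens_var f"
  have RF: "real_distribution ?F" by (rule real_dist_dens[OF fm nn prob])
  have RG: "real_distribution ?G" by (rule real_dist_dens[OF cf(1) cf(2) cm(1)])
  show ?thesis
  proof
    assume ae: "AE x in lborel. conv f f x = normal_density (2 * ?m) (sqrt (2 * ?v)) x"
    have s2: "sqrt (2 * ?v) > 0" using vp by simp
    have "?G = density lborel (\<lambda>x. ennreal (normal_density (2 * ?m) (sqrt (2 * ?v)) x))"
      using ae cf(2) by (subst dens_eq_AE) auto
    then have "\<And>t. (char ?F t)\<^sup>2 = iexp (2 * ?m * t) * complex_of_real (exp (- (sqrt (2 * ?v) * t)\<^sup>2 / 2))"
      using cm(4) char_normal[OF s2] by metis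
    also have "\<And>t. iexp (2 * ?m * t) * complex_of_real (exp (- (sqrt (2 * ?v) * t)\<^sup>2 / 2))
        = (iexp (?m * t) * complex_of_real (exp (- (sqrt ?v * t)\<^sup>2 / 2)))\<^sup>2"
      unfolding iexp_sq using vp by (simp add: power_mult_distrib algebra_simps)
    finally have "?F = density lborel (\<lambda>x. ennreal (normal_density ?m (sqrt ?v) x))"
      using char_sq_normal[OF RF] vp by simp
    then have "AE x in lborel. f x = normal_density ?m (sqrt ?v) x"
      using nn by (subst dens_eq_AE[symmetric]) auto
    then show "\<exists>m s. s > 0 \<and> (AE x in lborel. f x = normal_density m s x)"
      using vp by (intro exI[of _ ?m] exI[of _ "sqrt ?v"]) auto
  next
    assume "\<exists>m s. s > 0 \<and> (AE x in lborel. f x = normal_density m s x)"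
    then obtain m s where s: "s > 0" and ae: "AE x in lborel. f x = normal_density m s x" by blast
    have mm: "?m = m"
    proof -
      have "?m = (\<integral>x. normal_density m s x * x \<partial>lborel)"
        unfolding dens_mean_def by (rule integral_cong_AE) (use ae in auto)
      then show ?thesis using integral_normal_moment_nz_1[OF s] by simp
    qed
    have vv: "?v = s\<^sup>2"
    proof -
      have "?v = (\<integral>x. normal_density m s x * (x - m) ^ (2 * 1) \<partial>lborel)"
        unfolding dens_var_def mm by (rule integral_cong_AE) (use ae in auto)
      then show ?thesis using integral_normal_moment_even[OF s, of m 1] s by simp
    qed
    have FN: "?F = density lborel (\<lambda>x. ennreal (normal_density m s x))"
      using ae nn by (subst dens_eq_AE) auto
    have s2: "sqrt (2 * ?v) > 0" using vp by simp
    have "char ?G = char (density lborel (\<lambda>x. ennreal (normal_density (2 * ?m) (sqrt (2 * ?v)) x)))"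
    proof
      fix t
      have "char ?G t = (char ?F t)\<^sup>2" by (rule cm(4))
      also have "\<dots> = (iexp (m * t) * complex_of_real (exp (- (s * t)\<^sup>2 / 2)))\<^sup>2"
        unfolding FN char_normal[OF s] ..
      also have "\<dots> = iexp (2 * ?m * t) * complex_of_real (exp (- (sqrt (2 * ?v) * t)\<^sup>2 / 2))"
        unfolding iexp_sq mm vv using s by (simp add: power_mult_distrib algebra_simps)
      also have "\<dots> = char (density lborel (\<lambda>x. ennreal (normal_density (2 * ?m) (sqrt (2 * ?v)) x))) t"
        using char_normal[OF s2] by simp
      finally show "char ?G t = char (density lborel (\<lambda>x. ennreal (normal_density (2 * ?m) (sqrt (2 * ?v)) x))) t" .
    qed
    moreover have "real_distribution (density lborel (\<lambda>x. ennreal (normal_density (2 * ?m) (sqrt (2 * ?v)) x)))"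
      using prob_space_normal_density[OF s2] by (auto simp: real_distribution_def real_distribution_axioms_def)
    ultimately have "?G = density lborel (\<lambda>x. ennreal (normal_density (2 * ?m) (sqrt (2 * ?v)) x))"
      using Levy_uniqueness[OF RG] by blast
    then show "AE x in lborel. conv f f x = normal_density (2 * ?m) (sqrt (2 * ?v)) x"
      using cf(2) by (subst dens_eq_AE[symmetric]) auto
  qed
qed



theorem mainTheorem18:
  fixes f :: "real \<Rightarrow> real"
  assumes meas: "f \<in> borel_measurable lborel"
    and nonneg: "\<And>x. f x \<ge> 0"
    and prob: "has_bochner_integral lborel f 1"
    and finvar: "integrable lborel (\<lambda>x. x\<^sup>2 * f x)"
    and hX: "integrable lborel (\<lambda>x. f x * ln (f x))"
    and hXX: "integrable lborel (\<lambda>x. conv f f x * ln (conv f f x))"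
  shows "doubling_const f
           \<le> sqrt 2 * exp (rel_entropy f (normal_density (dens_mean f) (sqrt (dens_var f))))
       \<and> (doubling_const f
           = sqrt 2 * exp (rel_entropy f (normal_density (dens_mean f) (sqrt (dens_var f))))
         \<longleftrightarrow> (\<exists>m s. s > 0 \<and> (AE x in lborel. f x = normal_density m s x)))"
proof -
  have fm[measurable]: "f \<in> borel_measurable borel" using meas by simp
  note nn = nonneg
  note bm = basic_moments[OF fm nn prob finvar]
  note cf = conv_facts[OF fm nn prob]
  note cm = conv_moments[OF fm nn prob finvar]
  have gm[measurable]: "conv f f \<in> borel_measurable borel" by (rule cf(1))
  have vp: "dens_var f > 0" by (rule var_pos[OF fm nn prob finvar])
  define \<mu> where "\<mu> = dens_mean f"
  define v where "v = dens_var f"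
  have v0: "v > 0" using vp v_def by simp
  define R where "R = rel_entropy f (normal_density \<mu> (sqrt v))"
  have s0: "sqrt v > 0" "sqrt (2 * v) > 0" using v0 by auto
  have nb: "has_bochner_integral lborel (normal_density a b) 1" if "b > 0" for a b
    using that by (simp add: has_bochner_integral_iff)
  have iqf: "integrable lborel (\<lambda>x. f x * (x - \<mu>)\<^sup>2)" using bm(4) unfolding \<mu>_def by (simp add: mult.commute)
  have Vf: "(\<integral>x. f x * (x - \<mu>)\<^sup>2 \<partial>lborel) = v" unfolding v_def dens_var_def \<mu>_def by (simp add: mult.commute)
  note A = int_ln_normal[OF fm s0(1) prob iqf Vf]
  have Aval: "(\<integral>x. f x * ln (normal_density \<mu> (sqrt v) x) \<partial>lborel) = - ln (2 * pi * v) / 2 - 1 / 2"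
    using A(2) v0 by simp
  note GF = gibbs[OF fm borel_measurable_normal_density nn normal_density_pos[OF s0(1)] prob nb[OF s0(1)] hX A(1)]
  have Rval: "R = (\<integral>x. f x * ln (f x) \<partial>lborel) + ln (2 * pi * v) / 2 + 1 / 2"
    unfolding R_def rel_entropy_def using GF(2) Aval by simp
  have iqg: "integrable lborel (\<lambda>x. conv f f x * (x - 2 * \<mu>)\<^sup>2)" using cm(2) unfolding \<mu>_def .
  have Vg: "(\<integral>x. conv f f x * (x - 2 * \<mu>)\<^sup>2 \<partial>lborel) = 2 * v" using cm(3) unfolding \<mu>_def v_def .
  note B = int_ln_normal[OF gm s0(2) cm(1) iqg Vg]
  have Bval: "(\<integral>x. conv f f x * ln (normal_density (2 * \<mu>) (sqrt (2 * v)) x) \<partial>lborel) = - ln (2 * pi * (2 * v)) / 2 - 1 / 2"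
    using B(2) v0 by simp
  note GG = gibbs[OF gm borel_measurable_normal_density cf(2) normal_density_pos[OF s0(2)] cm(1) nb[OF s0(2)] hXX B(1)]
  define D2 where "D2 = (\<integral>x. conv f f x * ln (conv f f x / normal_density (2 * \<mu>) (sqrt (2 * v)) x) \<partial>lborel)"
  have D2val: "(\<integral>x. conv f f x * ln (conv f f x) \<partial>lborel) = D2 - ln (2 * pi * (2 * v)) / 2 - 1 / 2"
    unfolding D2_def using GG(2) Bval by simp
  have D20: "D2 \<ge> 0" unfolding D2_def using GG(3) .
  have ln4: "ln (2 * pi * (2 * v)) = ln 2 + ln (2 * pi * v)"
  proof -
    have "2 * pi * (2 * v) = 2 * (2 * pi * v)" by simp
    then show ?thesis using v0 by (simp only: ln_mult) (simp add: ln_mult)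
  qed
  have sq2: "exp (ln 2 / 2) = sqrt 2"
    by (simp add: powr_half_sqrt[symmetric] powr_def)
  have dc: "doubling_const f = exp (- D2) * (sqrt 2 * exp R)"
  proof -
    have "diff_entropy (conv f f) - diff_entropy f = - D2 + ln 2 / 2 + R"
      unfolding diff_entropy_def using D2val Rval ln4 by (simp add: field_simps)
    then have "doubling_const f = exp (- D2 + ln 2 / 2 + R)"
      unfolding doubling_const_def by simp
    also have "\<dots> = exp (- D2) * (exp (ln 2 / 2) * exp R)"
      by (simp only: exp_add mult.assoc)
    also have "\<dots> = exp (- D2) * (sqrt 2 * exp R)"
      by (simp only: sq2)
    finally show ?thesis .
  qed
  have pos: "sqrt 2 * exp R > 0" by simp
  have le: "doubling_const f \<le> sqrt 2 * exp R"
    unfolding dc using D20 pos by (simp add: mult_le_cancel_right1)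
  have eq: "doubling_const f = sqrt 2 * exp R \<longleftrightarrow> D2 = 0"
    unfolding dc using pos by simp
  have "D2 = 0 \<longleftrightarrow> (AE x in lborel. conv f f x = normal_density (2 * \<mu>) (sqrt (2 * v)) x)"
    unfolding D2_def using GG(4) .
  also have "\<dots> \<longleftrightarrow> (\<exists>m s. s > 0 \<and> (AE x in lborel. f x = normal_density m s x))"
    unfolding \<mu>_def v_def by (rule gauss_iff[OF fm nn prob finvar])
  finally show ?thesis using le eq unfolding R_def \<mu>_def v_def by simp
qed


end
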